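(* Let $A_1,\dots,A_m\in\mathbb{S}^n$, $b\in\mathbb{R}^m$, $C\in\mathbb{S}^n$. Let $X\in\mathcal{C}$ be a global optimum of (SDP) and assume strong duality holds, i.e., the dual problem $\max_{\nu\in\mathbb{R}^m}\langle b,\nu\rangle$ subject to $C-\mathcal{A}^*(\nu)\succeq0$ has an optimal solution $\nu$ with $\langle b,\nu\rangle=\langle C,X\rangle$. Let Assumption 1(a) hold with $p=\operatorname{rank}(X)$. Then, writing $X=YY^\top$ with $Y\in\mathbb{R}^{n\times p}$ and $S=S(Y)$, we have $S\succeq0$ and $\langle S,X\rangle=0$.
   Context: $\mathbb{S}^n$: real symmetric $n\times n$ matrices; $\langle U,V\rangle=\operatorname{tr}(U^\top V)$. $\mathcal{A}(X)_i=\langle A_i,X\rangle$, $\mathcal{A}^*(\nu)=\sum_i\nu_iA_i$. $\mathcal{C}=\{X\in\mathbb{S}^n:\mathcal{A}(X)=b,\ X\succeq0\}$; (SDP): minimize $\langle C,X\rangle$ over $\mathcal{C}$. $\mathcal{M}_p=\{Y\in\mathbb{R}^{n\times p}:\mathcal{A}(YY^\top)=b\}$. Assumption 1(a) for $p$: $A_1Y,\dots,A_mY$ are linearly independent in $\mathbb{R}^{n\times p}$ for all $Y\in\mathcal{M}_p$. For $Y\in\mathcal{M}_p$: $G_{ij}=\langle A_iY,A_jY\rangle$, $\mu=G^\dagger\mathcal{A}(CYY^\top)$ (Moore–Penrose pseudo-inverse), and $S(Y)=C-\mathcal{A}^*(\mu)$; this depends on $Y$ only through $YY^\top$. *)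

theory Defs
  imports "Jordan_Normal_Form.Matrix" "Jordan_Normal_Form.DL_Rank"
begin

definition frob :: "real mat \<Rightarrow> real mat \<Rightarrow> real" where
  "frob U V = (\<Sum>i<dim_row U. \<Sum>j<dim_col U. U $$ (i,j) * V $$ (i,j))"

definition sym_mat :: "nat \<Rightarrow> real mat \<Rightarrow> bool" where
  "sym_mat n M \<longleftrightarrow> M \<in> carrier_mat n n \<and> transpose_mat M = M"

definition psd :: "nat \<Rightarrow> real mat \<Rightarrow> bool" where
  "psd n M \<longleftrightarrow> sym_mat n M \<and> (\<forall>v \<in> carrier_vec n. v \<bullet> (M *\<^sub>v v) \<ge> 0)"

definition Aop :: "nat \<Rightarrow> (nat \<Rightarrow> real mat) \<Rightarrow> real mat \<Rightarrow> real vec" where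
  "Aop m A X = vec m (\<lambda>i. frob (A i) X)"

definition Astar :: "nat \<Rightarrow> nat \<Rightarrow> (nat \<Rightarrow> real mat) \<Rightarrow> real vec \<Rightarrow> real mat" where
  "Astar n m A \<nu> = mat n n (\<lambda>(j,k). \<Sum>i<m. \<nu> $ i * A i $$ (j,k))"

definition feasible :: "nat \<Rightarrow> nat \<Rightarrow> (nat \<Rightarrow> real mat) \<Rightarrow> real vec \<Rightarrow> real mat \<Rightarrow> bool" where
  "feasible n m A b X \<longleftrightarrow> psd n X \<and> Aop m A X = b"

definition dual_feasible :: "nat \<Rightarrow> nat \<Rightarrow> (nat \<Rightarrow> real mat) \<Rightarrow> real mat \<Rightarrow> real vec \<Rightarrow> bool" where
  "dual_feasible n m A C \<nu> \<longleftrightarrow> \<nu> \<in> carrier_vec m \<and> psd n (C - Astar n m A \<nu>)"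

definition pinv :: "real mat \<Rightarrow> real mat" where
  "pinv M = (THE P. P \<in> carrier_mat (dim_col M) (dim_row M) \<and>
       M * P * M = M \<and> P * M * P = P \<and>
       transpose_mat (M * P) = M * P \<and> transpose_mat (P * M) = P * M)"

definition lin_indep_mats :: "nat \<Rightarrow> nat \<Rightarrow> nat \<Rightarrow> (nat \<Rightarrow> real mat) \<Rightarrow> bool" where
  "lin_indep_mats m r c B \<longleftrightarrow>
     (\<forall>\<gamma> :: nat \<Rightarrow> real. (\<forall>j<r. \<forall>k<c. (\<Sum>i<m. \<gamma> i * B i $$ (j,k)) = 0) \<longrightarrow> (\<forall>i<m. \<gamma> i = 0))"

definition assumption1a :: "nat \<Rightarrow> nat \<Rightarrow> (nat \<Rightarrow> real mat) \<Rightarrow> real vec \<Rightarrow> nat \<Rightarrow> bool" where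
  "assumption1a n m A b p \<longleftrightarrow>
     (\<forall>Y \<in> carrier_mat n p. Aop m A (Y * transpose_mat Y) = b \<longrightarrow>
        lin_indep_mats m n p (\<lambda>i. A i * Y))"

definition gram :: "nat \<Rightarrow> (nat \<Rightarrow> real mat) \<Rightarrow> real mat \<Rightarrow> real mat" where
  "gram m A Y = mat m m (\<lambda>(i,j). frob (A i * Y) (A j * Y))"

definition mu :: "nat \<Rightarrow> (nat \<Rightarrow> real mat) \<Rightarrow> real mat \<Rightarrow> real mat \<Rightarrow> real vec" where
  "mu m A C Y = pinv (gram m A Y) *\<^sub>v Aop m A (C * Y * transpose_mat Y)"

definition Smat :: "nat \<Rightarrow> nat \<Rightarrow> (nat \<Rightarrow> real mat) \<Rightarrow> real mat \<Rightarrow> real mat \<Rightarrow> real mat" where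
  "Smat n m A C Y = C - Astar n m A (mu m A C Y)"

end

theory Submission
  imports Defs
begin
definition bil :: "nat \<Rightarrow> real mat \<Rightarrow> (nat\<Rightarrow>real) \<Rightarrow> (nat\<Rightarrow>real) \<Rightarrow> real" where
 "bil n M f g = (\<Sum>a<n. \<Sum>b<n. f a * M$$(a,b) * g b)"

lemma qf_vec: assumes "M \<in> carrier_mat n n" "v \<in> carrier_vec n"
  shows "v \<bullet> (M *\<^sub>v v) = bil n M (\<lambda>i. v$i) (\<lambda>i. v$i)"
  using assms unfolding bil_def scalar_prod_def mult_mat_vec_def
  by (auto simp: sum_distrib_left atLeast0LessThan scalar_prod_def intro!: sum.cong)

lemma psd_iff: "psd n M \<longleftrightarrow> sym_mat n M \<and> (\<forall>f. 0 \<le> bil n M f f)"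
proof
  assume "psd n M"
  then have s: "sym_mat n M" and p: "\<forall>v \<in> carrier_vec n. v \<bullet> (M *\<^sub>v v) \<ge> 0" unfolding psd_def by auto
  have "0 \<le> bil n M f f" for f
  proof -
    have "0 \<le> vec n f \<bullet> (M *\<^sub>v vec n f)" using p by auto
    also have "\<dots> = bil n M f f" using s unfolding sym_mat_def
      by (subst qf_vec) (auto simp: bil_def)
    finally show ?thesis .
  qed
  then show "sym_mat n M \<and> (\<forall>f. 0 \<le> bil n M f f)" using s by auto
next
  assume a: "sym_mat n M \<and> (\<forall>f. 0 \<le> bil n M f f)"
  then show "psd n M" unfolding psd_def sym_mat_def using qf_vec by auto
qed

lemma sym_entry: "sym_mat n M \<Longrightarrow> a < n \<Longrightarrow> b < n \<Longrightarrow> M$$(a,b) = M$$(b,a)"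
  unfolding sym_mat_def by (metis carrier_matD index_transpose_mat(1))

lemma bil_sym: "sym_mat n M \<Longrightarrow> bil n M f g = bil n M g f"
  unfolding bil_def
  apply (subst sum.swap)
  apply (intro sum.cong refl)
  by (simp add: sym_entry mult.commute)

lemma bil_add_left: "bil n M (\<lambda>i. f i + g i) h = bil n M f h + bil n M g h"
  unfolding bil_def by (simp add: algebra_simps sum.distrib)
lemma bil_add_right: "bil n M h (\<lambda>i. f i + g i) = bil n M h f + bil n M h g"
  unfolding bil_def by (simp add: algebra_simps sum.distrib)
lemma bil_smult_left: "bil n M (\<lambda>i. t * f i) h = t * bil n M f h"
  unfolding bil_def by (simp add: algebra_simps sum_distrib_left)
lemma bil_smult_right: "bil n M h (\<lambda>i. t * f i) = t * bil n M h f"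
  unfolding bil_def by (simp add: algebra_simps sum_distrib_left)

lemma cs_real:
  fixes a b c :: real
  assumes h: "\<And>t. 0 \<le> a + 2*t*b + t^2*c" and c0: "0 \<le> c"
  shows "b^2 \<le> a*c"
proof (cases "c = 0")
  case True
  have "b = 0"
  proof (rule ccontr)
    assume "b \<noteq> 0"
    have "0 \<le> a + 2*(-(a+1)/(2*b))*b" using h[of "-(a+1)/(2*b)"] True by simp
    also have "\<dots> = -1" using \<open>b \<noteq> 0\<close> by (simp add: field_simps)
    finally show False by simp
  qed
  then show ?thesis using h[of 0] True by simp
next
  case False
  then have c: "c > 0" using c0 by simp
  have "0 \<le> a + 2*(-b/c)*b + (-b/c)^2*c" by (rule h)
  also have "\<dots> = a - b^2/c" using c by (simp add: field_simps power2_eq_square)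
  finally have "b^2/c \<le> a" by simp
  then show ?thesis using c by (simp add: field_simps mult.commute)
qed


lemma cs_bil:
  assumes "psd n M"
  shows "(bil n M f g)^2 \<le> bil n M f f * bil n M g g"
proof (rule cs_real)
  fix t
  have s: "sym_mat n M" and p: "\<And>h. 0 \<le> bil n M h h"
    using assms by (auto simp: psd_iff)
  have "bil n M (\<lambda>i. f i + t * g i) (\<lambda>i. f i + t * g i) = bil n M f f + 2*t*bil n M f g + t^2 * bil n M g g"
    unfolding bil_add_left bil_add_right bil_smult_left bil_smult_right
    using bil_sym[OF s, of g f] by (simp add: algebra_simps power2_eq_square)
  then show "0 \<le> bil n M f f + 2*t*bil n M f g + t^2 * bil n M g g" using p by metis
  show "0 \<le> bil n M g g" using p by auto
qed

lemma bil_delta_left: "i < n \<Longrightarrow> bil n M (\<lambda>a. if a = i then 1 else 0) g = (\<Sum>b<n. M$$(i,b) * g b)"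
proof -
  assume i: "i < n"
  have "bil n M (\<lambda>a. if a = i then 1 else 0) g = (\<Sum>a<n. if a = i then (\<Sum>b<n. M$$(i,b) * g b) else 0)"
    unfolding bil_def by (intro sum.cong) auto
  then show ?thesis using i by simp
qed
lemma bil_delta_right: "j < n \<Longrightarrow> bil n M f (\<lambda>a. if a = j then 1 else 0) = (\<Sum>a<n. f a * M$$(a,j))"
proof -
  assume i: "j < n"
  have "bil n M f (\<lambda>a. if a = j then 1 else 0) = (\<Sum>a<n. (\<Sum>b<n. if b = j then f a * M$$(a,j) else 0))"
    unfolding bil_def by (intro sum.cong) auto
  then show ?thesis using i by simp
qed
lemma bil_delta2: "i < n \<Longrightarrow> j < n \<Longrightarrow> bil n M (\<lambda>a. if a = i then 1 else 0) (\<lambda>a. if a = j then 1 else 0) = M$$(i,j)"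
  by (simp add: bil_delta_left if_distrib cong: if_cong)

lemma psd_diag: "psd n M \<Longrightarrow> i < n \<Longrightarrow> 0 \<le> M$$(i,i)"
  by (metis psd_iff bil_delta2)

lemma psd_zero_diag: assumes "psd n M" "i < n" "j < n" "M$$(i,i) = 0" shows "M$$(i,j) = 0"
  using cs_bil[OF assms(1), of "\<lambda>a. if a = i then 1 else 0" "\<lambda>a. if a = j then 1 else 0"] assms
  by (simp add: bil_delta2)


lemma ZZt_entry: "Z \<in> carrier_mat n k \<Longrightarrow> a < n \<Longrightarrow> b < n \<Longrightarrow>
   (Z * transpose_mat Z)$$(a,b) = (\<Sum>l<k. Z$$(a,l) * Z$$(b,l))"
  by (simp add: scalar_prod_def atLeast0LessThan)

lemma ABt_entry: "D \<in> carrier_mat n k \<Longrightarrow> Z \<in> carrier_mat n k \<Longrightarrow> a < n \<Longrightarrow> b < n \<Longrightarrow>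
   (D * transpose_mat Z)$$(a,b) = (\<Sum>l<k. D$$(a,l) * Z$$(b,l))"
  by (simp add: scalar_prod_def atLeast0LessThan)

lemma elim_step:
  assumes X: "psd n X" and i: "i < n" and pos: "X$$(i,i) > 0"
  shows "psd n (mat n n (\<lambda>(a,b). X$$(a,b) - (X$$(a,i)/sqrt(X$$(i,i))) * (X$$(b,i)/sqrt(X$$(i,i)))))"
proof -
  define y where "y a = X$$(a,i)/sqrt(X$$(i,i))" for a
  define X' where "X' = mat n n (\<lambda>(a,b). X$$(a,b) - y a * y b)"
  have s: "sym_mat n X" and p: "\<And>h. 0 \<le> bil n X h h" using X by (auto simp: psd_iff)
  have sym': "sym_mat n X'" unfolding sym_mat_def X'_def
    by (auto intro!: eq_matI simp: sym_entry[OF s])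
  have "0 \<le> bil n X' f f" for f
  proof -
    have "bil n X' f f = bil n X f f - (\<Sum>a<n. f a * y a) * (\<Sum>b<n. f b * y b)"
      unfolding bil_def X'_def sum_product
      by (simp add: sum_subtractf[symmetric] algebra_simps)
    also have "(\<Sum>a<n. f a * y a) = bil n X f (\<lambda>a. if a = i then 1 else 0) / sqrt(X$$(i,i))"
      unfolding bil_delta_right[OF i] y_def by (simp add: sum_divide_distrib)
    finally have e: "bil n X' f f = bil n X f f - (bil n X f (\<lambda>a. if a = i then 1 else 0))^2 / X$$(i,i)"
      using pos by (simp add: power2_eq_square)
    have "(bil n X f (\<lambda>a. if a = i then 1 else 0))^2 \<le> bil n X f f * X$$(i,i)"
      using cs_bil[OF X, of f "\<lambda>a. if a = i then 1 else 0"] bil_delta2[OF i i] by simp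
    then have "(bil n X f (\<lambda>a. if a = i then 1 else 0))^2 / X$$(i,i) \<le> bil n X f f"
      using pos by (simp add: divide_le_eq)
    then show ?thesis using e by simp
  qed
  then have "psd n X'" using sym' by (simp add: psd_iff)
  then show ?thesis unfolding X'_def y_def .
qed


lemma chol:
  "psd n X \<Longrightarrow> \<exists>k Z p. Z \<in> carrier_mat n k \<and> X = Z * transpose_mat Z \<and>
     (\<forall>j<k. p j < n \<and> Z$$(p j, j) \<noteq> 0 \<and> (\<forall>l. j < l \<and> l < k \<longrightarrow> Z$$(p j, l) = 0))"
proof (induction "card {i. i < n \<and> X$$(i,i) \<noteq> 0}" arbitrary: X rule: less_induct)
  case less
  have Xc: "X \<in> carrier_mat n n" using less.prems unfolding psd_def sym_mat_def by auto
  show ?case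
  proof (cases "{i. i < n \<and> X$$(i,i) \<noteq> 0} = {}")
    case True
    have "X = 0\<^sub>m n 0 * transpose_mat (0\<^sub>m n 0)"
    proof (rule eq_matI)
      fix a b assume ab: "a < dim_row (0\<^sub>m n 0 * transpose_mat (0\<^sub>m n 0 :: real mat))"
         "b < dim_col (0\<^sub>m n 0 * transpose_mat (0\<^sub>m n 0 :: real mat))"
      then have "a < n" "b < n" by auto
      then have "X$$(a,b) = 0" using True psd_zero_diag[OF less.prems] by auto
      then show "X$$(a,b) = (0\<^sub>m n 0 * transpose_mat (0\<^sub>m n 0))$$(a,b)"
        using ab by (simp add: scalar_prod_def)
    qed (use Xc in auto)
    then show ?thesis by (intro exI[of _ 0] exI[of _ "0\<^sub>m n 0"]) auto
  next
    case False
    then obtain i where i: "i < n" and nz: "X$$(i,i) \<noteq> 0" by auto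
    have pos: "X$$(i,i) > 0" using psd_diag[OF less.prems i] nz by simp
    define y where "y a = X$$(a,i)/sqrt(X$$(i,i))" for a
    define X' where "X' = mat n n (\<lambda>(a,b). X$$(a,b) - y a * y b)"
    have X': "psd n X'" unfolding X'_def y_def by (rule elim_step[OF less.prems i pos])
    have yi: "y i * y i = X$$(i,i)" unfolding y_def using pos
      by (simp add: power_divide power2_eq_square[symmetric]) (simp add: power2_eq_square)
    have sub: "{j. j < n \<and> X'$$(j,j) \<noteq> 0} \<subset> {j. j < n \<and> X$$(j,j) \<noteq> 0}"
    proof
      show "{j. j < n \<and> X'$$(j,j) \<noteq> 0} \<subseteq> {j. j < n \<and> X$$(j,j) \<noteq> 0}"
      proof (safe)
        fix j assume j: "j < n" "X'$$(j,j) \<noteq> 0" "X$$(j,j) = 0"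
        then have "X$$(j,i) = 0" using psd_zero_diag[OF less.prems j(1) i] by simp
        then have "y j = 0" unfolding y_def by simp
        then show False using j unfolding X'_def by simp
      qed
      have "X'$$(i,i) = 0" unfolding X'_def using i yi by simp
      then show "{j. j < n \<and> X'$$(j,j) \<noteq> 0} \<noteq> {j. j < n \<and> X$$(j,j) \<noteq> 0}"
        using i nz by blast
    qed
    have "card {j. j < n \<and> X'$$(j,j) \<noteq> 0} < card {j. j < n \<and> X$$(j,j) \<noteq> 0}"
      by (rule psubset_card_mono[OF _ sub]) auto
    from less.hyps[OF this X'] obtain k Z' p' where
      Z': "Z' \<in> carrier_mat n k" and XZ': "X' = Z' * transpose_mat Z'"
      and piv: "\<forall>j<k. p' j < n \<and> Z'$$(p' j, j) \<noteq> 0 \<and> (\<forall>l. j < l \<and> l < k \<longrightarrow> Z'$$(p' j, l) = 0)"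
      by blast
    have rowi: "Z'$$(i,l) = 0" if l: "l < k" for l
    proof -
      have "X'$$(i,i) = 0" unfolding X'_def using i yi by simp
      then have "(\<Sum>l<k. Z'$$(i,l) * Z'$$(i,l)) = 0" using ZZt_entry[OF Z' i i] XZ' by simp
      then have "\<forall>l\<in>{..<k}. Z'$$(i,l) * Z'$$(i,l) = 0"
        by (subst sum_nonneg_eq_0_iff[symmetric]) auto
      then show ?thesis using l by auto
    qed
    define Z where "Z = mat n (Suc k) (\<lambda>(a,l). if l = 0 then y a else Z'$$(a,l-1))"
    define p where "p j = (if j = 0 then i else p' (j-1))" for j
    have Zc: "Z \<in> carrier_mat n (Suc k)" unfolding Z_def by simp
    have XZ: "X = Z * transpose_mat Z"
    proof (rule eq_matI)
      fix a b assume "a < dim_row (Z * transpose_mat Z)" "b < dim_col (Z * transpose_mat Z)"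
      then have a: "a < n" and b: "b < n" using Zc by auto
      have "(Z * transpose_mat Z)$$(a,b) = (\<Sum>l<Suc k. Z$$(a,l) * Z$$(b,l))"
        by (rule ZZt_entry[OF Zc a b])
      also have "\<dots> = y a * y b + (\<Sum>l<k. Z'$$(a,l) * Z'$$(b,l))"
        unfolding sum.lessThan_Suc_shift using a b by (simp add: Z_def)
      also have "\<dots> = y a * y b + X'$$(a,b)" using ZZt_entry[OF Z' a b] XZ' by simp
      also have "\<dots> = X$$(a,b)" unfolding X'_def using a b by simp
      finally show "X$$(a,b) = (Z * transpose_mat Z)$$(a,b)" by simp
    qed (use Xc Zc in auto)
    have "\<forall>j<Suc k. p j < n \<and> Z$$(p j, j) \<noteq> 0 \<and> (\<forall>l. j < l \<and> l < Suc k \<longrightarrow> Z$$(p j, l) = 0)"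
    proof (intro allI impI)
      fix j assume j: "j < Suc k"
      show "p j < n \<and> Z$$(p j, j) \<noteq> 0 \<and> (\<forall>l. j < l \<and> l < Suc k \<longrightarrow> Z$$(p j, l) = 0)"
      proof (cases "j = 0")
        case True
        have "y i \<noteq> 0" using yi pos by auto
        then show ?thesis using True i rowi by (auto simp: p_def Z_def)
      next
        case False
        then obtain j' where j': "j = Suc j'" by (cases j) auto
        then have "j' < k" using j by simp
        then have h: "p' j' < n" "Z'$$(p' j', j') \<noteq> 0" "\<forall>l. j' < l \<and> l < k \<longrightarrow> Z'$$(p' j',l) = 0"
          using piv by auto
        have h2: "\<forall>l. Suc j' < l \<and> l < Suc k \<longrightarrow> Z'$$(p' j', l - 1) = 0"
        proof (intro allI impI)
          fix l assume "Suc j' < l \<and> l < Suc k"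
          then have "j' < l - 1 \<and> l - 1 < k" by auto
          then show "Z'$$(p' j', l - 1) = 0" using h(3) by blast
        qed
        show ?thesis using h h2 j' \<open>j' < k\<close> by (auto simp: p_def Z_def)
      qed
    qed
    then show ?thesis using Zc XZ by blast
  qed
qed


lemma mult_unit_col: "(P :: real mat) \<in> carrier_mat n k \<Longrightarrow> i < k \<Longrightarrow> P *\<^sub>v unit_vec k i = col P i"
  by (intro eq_vecI) (auto simp: scalar_prod_right_unit)

lemma inj_distinct_cols:
  assumes P: "(P :: real mat) \<in> carrier_mat n k"
    and inj: "\<And>c :: real vec. c \<in> carrier_vec k \<Longrightarrow> P *\<^sub>v c = 0\<^sub>v n \<Longrightarrow> c = 0\<^sub>v k"
  shows "distinct (cols P)"
proof (subst distinct_conv_nth, intro allI impI)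
  fix i j assume i: "i < length (cols P)" and j: "j < length (cols P)" and ij: "i \<noteq> j"
  then have i': "i < k" and j': "j < k" using P by auto
  show "cols P ! i \<noteq> cols P ! j"
  proof
    assume "cols P ! i = cols P ! j"
    then have e: "col P i = col P j" using i' j' P by auto
    define c :: "real vec" where "c = unit_vec k i - unit_vec k j"
    have cc: "c \<in> carrier_vec k" unfolding c_def by simp
    have "P *\<^sub>v c = col P i - col P j"
      unfolding c_def using P i' j' by (simp add: mult_minus_distrib_mat_vec mult_unit_col)
    also have "\<dots> = 0\<^sub>v n" unfolding e using P by (intro eq_vecI) auto
    finally have "c = 0\<^sub>v k" using inj cc by auto
    then have "c $ i = 0" using i' by simp
    moreover have "c $ i = 1" unfolding c_def using i' j' ij by simp
    ultimately show False by simp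
  qed
qed

lemma tri_inj:
  assumes W: "(W :: real mat) \<in> carrier_mat k k" and lt: "\<And>i j. i < j \<Longrightarrow> j < k \<Longrightarrow> W $$ (i,j) = 0"
    and d: "\<And>i. i < k \<Longrightarrow> W $$ (i,i) \<noteq> 0"
  shows "det W \<noteq> 0"
proof -
  have "det W = prod_list (diag_mat W)" by (rule det_lower_triangular[OF lt W])
  also have "\<dots> = (\<Prod>i = 0..<k. W $$ (i,i))" using W by (simp add: prod_list_diag_prod)
  also have "\<dots> \<noteq> 0" using d by (auto simp: prod_zero_iff)
  finally show ?thesis .
qed

lemma det_inj: "(W :: real mat) \<in> carrier_mat k k \<Longrightarrow> det W \<noteq> 0 \<Longrightarrow> (c :: real vec) \<in> carrier_vec k \<Longrightarrow> W *\<^sub>v c = 0\<^sub>v k \<Longrightarrow> c = 0\<^sub>v k"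
  using det_0_iff_vec_prod_zero by blast

lemma rank_lb:
  fixes Z X :: "real mat"
  assumes Zc: "Z \<in> carrier_mat n k" and XZ: "X = Z * transpose_mat Z"
    and piv: "\<forall>j<k. p j < n \<and> Z$$(p j, j) \<noteq> 0 \<and> (\<forall>l. j < l \<and> l < k \<longrightarrow> Z$$(p j, l) = 0)"
  shows "k \<le> vec_space.rank n X"
proof -
  interpret V: vec_space "TYPE(real)" n .
  define W where "W = mat k k (\<lambda>(j,l). Z$$(p j, l))"
  have Wc: "W \<in> carrier_mat k k" unfolding W_def by simp
  have dW: "det W \<noteq> 0"
    by (rule tri_inj[OF Wc]) (use piv in \<open>auto simp: W_def\<close>)
  have dWt: "det (transpose_mat W) \<noteq> 0" using dW det_transpose[OF Wc] by simp
  have Xc: "X \<in> carrier_mat n n" using XZ Zc by simp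
  have Zinj: "c = 0\<^sub>v k" if c: "c \<in> carrier_vec k" and Zc0: "Z *\<^sub>v c = 0\<^sub>v n" for c
  proof (rule det_inj[OF Wc dW c])
    show "W *\<^sub>v c = 0\<^sub>v k"
    proof (rule eq_vecI)
      fix j assume "j < dim_vec (0\<^sub>v k :: real vec)"
      then have j: "j < k" by simp
      have "(W *\<^sub>v c) $ j = (Z *\<^sub>v c) $ (p j)"
        using j c Zc piv by (auto simp: W_def scalar_prod_def)
      also have "\<dots> = 0" using Zc0 piv j by simp
      finally show "(W *\<^sub>v c) $ j = (0\<^sub>v k :: real vec) $ j" using j by simp
    qed (use Wc in auto)
  qed
  define P where "P = Z * transpose_mat W"
  have Pc: "P \<in> carrier_mat n k" unfolding P_def using Zc Wc by simp
  have Pinj: "c = 0\<^sub>v k" if c: "c \<in> carrier_vec k" and P0: "P *\<^sub>v c = 0\<^sub>v n" for c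
  proof -
    have "Z *\<^sub>v (transpose_mat W *\<^sub>v c) = 0\<^sub>v n" using P0 unfolding P_def using Zc Wc c by simp
    moreover have "transpose_mat W *\<^sub>v c \<in> carrier_vec k" using Wc c by simp
    ultimately have "transpose_mat W *\<^sub>v c = 0\<^sub>v k" using Zinj by blast
    then show ?thesis using det_inj[OF _ dWt c] Wc by simp
  qed
  have colP: "col P j = col X (p j)" if j: "j < k" for j
  proof (rule eq_vecI)
    fix a assume "a < dim_vec (col X (p j))"
    then have a: "a < n" using Xc by simp
    show "col P j $ a = col X (p j) $ a"
      using a j Pc Xc Zc piv unfolding P_def XZ by (auto simp: W_def scalar_prod_def)
  qed (use Pc Xc in auto)
  have dist: "distinct (cols P)" by (rule inj_distinct_cols[OF Pc Pinj])
  have sub: "set (cols P) \<subseteq> set (cols X)"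
  proof
    fix v assume "v \<in> set (cols P)"
    then obtain j where j: "j < k" and v: "v = col P j" using Pc by (auto simp: in_set_conv_nth)
    have "col X (p j) \<in> set (cols X)" using piv j Xc by (auto simp: in_set_conv_nth intro!: exI[of _ "p j"])
    then show "v \<in> set (cols X)" using colP j v by simp
  qed
  have indep: "V.lin_indpt (set (cols P))"
  proof
    assume "V.lin_dep (set (cols P))"
    then obtain c where "c \<in> carrier_vec k" "c \<noteq> 0\<^sub>v k" "P *\<^sub>v c = 0\<^sub>v n"
      using V.lin_depE[OF Pc _ dist] by blast
    then show False using Pinj by blast
  qed
  have "card (set (cols P)) \<le> V.rank X" by (rule V.rank_ge_card_indpt[OF Xc sub indep])
  moreover have "card (set (cols P)) = k" using distinct_card[OF dist] Pc by simp
  ultimately show ?thesis by simp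
qed


lemma factor_exists:
  assumes "psd n X"
  shows "\<exists>Y \<in> carrier_mat n (vec_space.rank n X). X = Y * transpose_mat Y"
proof -
  obtain k Z p where Zc: "Z \<in> carrier_mat n k" and XZ: "X = Z * transpose_mat Z"
    and piv: "\<forall>j<k. p j < n \<and> Z$$(p j, j) \<noteq> 0 \<and> (\<forall>l. j < l \<and> l < k \<longrightarrow> Z$$(p j, l) = 0)"
    using chol[OF assms] by blast
  define r where "r = vec_space.rank n X"
  have kr: "k \<le> r" unfolding r_def by (rule rank_lb[OF Zc XZ piv])
  define Y where "Y = mat n r (\<lambda>(a,l). if l < k then Z$$(a,l) else 0)"
  have Yc: "Y \<in> carrier_mat n r" unfolding Y_def by simp
  have "X = Y * transpose_mat Y"
  proof (rule eq_matI)
    fix a b assume "a < dim_row (Y * transpose_mat Y)" "b < dim_col (Y * transpose_mat Y)"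
    then have a: "a < n" and b: "b < n" using Yc by auto
    have "(Y * transpose_mat Y)$$(a,b) = (\<Sum>l<r. Y$$(a,l) * Y$$(b,l))" by (rule ZZt_entry[OF Yc a b])
    also have "\<dots> = (\<Sum>l<k. Y$$(a,l) * Y$$(b,l))"
      by (rule sum.mono_neutral_right) (use kr in \<open>auto simp: Y_def a b\<close>)
    also have "\<dots> = (\<Sum>l<k. Z$$(a,l) * Z$$(b,l))"
      by (rule sum.cong) (use kr in \<open>auto simp: Y_def a b\<close>)
    also have "\<dots> = X$$(a,b)" using ZZt_entry[OF Zc a b] XZ by simp
    finally show "X$$(a,b) = (Y * transpose_mat Y)$$(a,b)" by simp
  qed (use XZ Zc Yc in auto)
  then show ?thesis using Yc unfolding r_def by blast
qed

lemma sum3_swap: "(\<Sum>a\<in>A. \<Sum>b\<in>B. \<Sum>l\<in>L. F a b l) = (\<Sum>l\<in>L. \<Sum>a\<in>A. \<Sum>b\<in>B. F a b l)"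
proof -
  have "(\<Sum>a\<in>A. \<Sum>b\<in>B. \<Sum>l\<in>L. F a b l) = (\<Sum>a\<in>A. \<Sum>l\<in>L. \<Sum>b\<in>B. F a b l)"
    by (rule sum.cong[OF refl], rule sum.swap)
  also have "\<dots> = (\<Sum>l\<in>L. \<Sum>a\<in>A. \<Sum>b\<in>B. F a b l)" by (rule sum.swap)
  finally show ?thesis .
qed

lemma psd_kill:
  assumes S: "psd n S" and Yc: "Y \<in> carrier_mat n r" and z: "frob S (Y * transpose_mat Y) = 0"
  shows "\<forall>a<n. \<forall>l<r. (\<Sum>b<n. S$$(a,b) * Y$$(b,l)) = 0"
proof (intro allI impI)
  fix a l assume a: "a < n" and l: "l < r"
  have Sc: "S \<in> carrier_mat n n" using S unfolding psd_def sym_mat_def by auto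
  have "frob S (Y * transpose_mat Y) = (\<Sum>a<n. \<Sum>b<n. \<Sum>l<r. Y$$(a,l) * S$$(a,b) * Y$$(b,l))"
  proof -
    have dS: "dim_row S = n" "dim_col S = n" using Sc by auto
    show ?thesis unfolding frob_def dS
    proof (intro sum.cong refl)
      fix a b assume "a \<in> {..<n}" "b \<in> {..<n}"
      then have a: "a < n" and b: "b < n" by auto
      show "S$$(a,b) * (Y * transpose_mat Y)$$(a,b) = (\<Sum>l<r. Y$$(a,l) * S$$(a,b) * Y$$(b,l))"
        unfolding ZZt_entry[OF Yc a b] sum_distrib_left by (intro sum.cong refl) (simp only: ac_simps)
    qed
  qed
  also have "\<dots> = (\<Sum>l<r. bil n S (\<lambda>a. Y$$(a,l)) (\<lambda>a. Y$$(a,l)))"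
    unfolding bil_def by (rule sum3_swap)
  finally have "(\<Sum>l<r. bil n S (\<lambda>a. Y$$(a,l)) (\<lambda>a. Y$$(a,l))) = 0" using z by simp
  moreover have "\<forall>l\<in>{..<r}. 0 \<le> bil n S (\<lambda>a. Y$$(a,l)) (\<lambda>a. Y$$(a,l))"
    using S by (auto simp: psd_iff)
  ultimately have "\<forall>l\<in>{..<r}. bil n S (\<lambda>a. Y$$(a,l)) (\<lambda>a. Y$$(a,l)) = 0"
    using sum_nonneg_eq_0_iff[OF finite_lessThan, of r "\<lambda>l. bil n S (\<lambda>a. Y$$(a,l)) (\<lambda>a. Y$$(a,l))"] by simp
  then have z2: "bil n S (\<lambda>a. Y$$(a,l)) (\<lambda>a. Y$$(a,l)) = 0" using l by auto
  have "(bil n S (\<lambda>b. if b = a then 1 else 0) (\<lambda>a. Y$$(a,l)))^2 \<le> 0"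
    using cs_bil[OF S, of "\<lambda>b. if b = a then 1 else 0" "\<lambda>a. Y$$(a,l)"] z2 by simp
  then have "bil n S (\<lambda>b. if b = a then 1 else 0) (\<lambda>a. Y$$(a,l)) = 0" by simp
  then show "(\<Sum>b<n. S$$(a,b) * Y$$(b,l)) = 0" using bil_delta_left[OF a] by simp
qed

theorem proposition6:
  fixes n m :: nat and A :: "nat \<Rightarrow> real mat" and b :: "real vec"
    and C X :: "real mat"
  assumes A_sym: "\<forall>i<m. sym_mat n (A i)"
    and b_dim: "b \<in> carrier_vec m"
    and C_sym: "sym_mat n C"
    and X_feas: "feasible n m A b X"
    and X_opt: "\<forall>X'. feasible n m A b X' \<longrightarrow> frob C X \<le> frob C X'"
    and strong_duality: "\<exists>\<nu>. dual_feasible n m A C \<nu> \<and>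
           (\<forall>\<nu>'. dual_feasible n m A C \<nu>' \<longrightarrow> b \<bullet> \<nu>' \<le> b \<bullet> \<nu>) \<and>
           b \<bullet> \<nu> = frob C X"
    and assm1a: "assumption1a n m A b (vec_space.rank n X)"
  shows "(\<exists>Y \<in> carrier_mat n (vec_space.rank n X). X = Y * transpose_mat Y) \<and>
         (\<forall>Y \<in> carrier_mat n (vec_space.rank n X). X = Y * transpose_mat Y \<longrightarrow>
            psd n (Smat n m A C Y) \<and> frob (Smat n m A C Y) X = 0)"
proof -
  have Xpsd: "psd n X" and AX: "Aop m A X = b" using X_feas unfolding feasible_def by auto
  have Xc: "X \<in> carrier_mat n n" using Xpsd unfolding psd_def sym_mat_def by auto
  have Ac: "\<And>i. i < m \<Longrightarrow> A i \<in> carrier_mat n n" using A_sym unfolding sym_mat_def by auto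
  have Adim: "\<And>i. i < m \<Longrightarrow> dim_row (A i) = n" "\<And>i. i < m \<Longrightarrow> dim_col (A i) = n"
    using Ac by auto
  have Cc: "C \<in> carrier_mat n n" using C_sym unfolding sym_mat_def by auto
  have bi: "\<And>i. i < m \<Longrightarrow> b $ i = frob (A i) X" using AX unfolding Aop_def by auto
  show ?thesis
  proof
    show "\<exists>Y \<in> carrier_mat n (vec_space.rank n X). X = Y * transpose_mat Y"
      by (rule factor_exists[OF Xpsd])
    show "\<forall>Y \<in> carrier_mat n (vec_space.rank n X). X = Y * transpose_mat Y \<longrightarrow>
            psd n (Smat n m A C Y) \<and> frob (Smat n m A C Y) X = 0"
    proof (intro ballI impI)
      fix Y assume Yc0: "Y \<in> carrier_mat n (vec_space.rank n X)" and XY: "X = Y * transpose_mat Y"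
      define r where "r = vec_space.rank n X"
      have Yc: "Y \<in> carrier_mat n r" using Yc0 unfolding r_def .
      obtain \<nu> where dual: "dual_feasible n m A C \<nu>" and eq: "b \<bullet> \<nu> = frob C X"
        using strong_duality by blast
      have \<nu>c: "\<nu> \<in> carrier_vec m" and Spsd: "psd n (C - Astar n m A \<nu>)"
        using dual unfolding dual_feasible_def by auto
      define S where "S = C - Astar n m A \<nu>"
      have Sc: "S \<in> carrier_mat n n" unfolding S_def Astar_def by (rule minus_carrier_mat) simp
      have S_entry: "S$$(a,c) = C$$(a,c) - (\<Sum>i<m. \<nu>$i * A i $$(a,c))" if "a < n" "c < n" for a c
        unfolding S_def Astar_def using that Cc by simp
      have frobS: "frob S X = 0"
      proof -
        have "frob S X = (\<Sum>a<n. \<Sum>c<n. C$$(a,c) * X$$(a,c) - (\<Sum>i<m. \<nu>$i * A i $$(a,c) * X$$(a,c)))"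
          unfolding frob_def using Sc
          by (simp, intro sum.cong refl) (simp add: S_entry left_diff_distrib sum_distrib_right)
        also have "\<dots> = frob C X - (\<Sum>a<n. \<Sum>c<n. \<Sum>i<m. \<nu>$i * A i $$(a,c) * X$$(a,c))"
          unfolding frob_def using Cc by (simp add: sum_subtractf)
        also have "(\<Sum>a<n. \<Sum>c<n. \<Sum>i<m. \<nu>$i * A i $$(a,c) * X$$(a,c)) = (\<Sum>i<m. \<nu>$i * frob (A i) X)"
          by (subst sum3_swap, intro sum.cong refl) (simp add: frob_def Adim sum_distrib_left mult.assoc)
        also have "\<dots> = b \<bullet> \<nu>"
          unfolding scalar_prod_def using \<nu>c bi by (simp add: atLeast0LessThan mult.commute)
        finally show ?thesis using eq by simp
      qed
      have kill: "\<forall>a<n. \<forall>l<r. (\<Sum>c<n. S$$(a,c) * Y$$(c,l)) = 0"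
        by (rule psd_kill[OF Spsd[folded S_def] Yc]) (use frobS XY in simp)
      have AYe: "(A i * Y)$$(a,l) = (\<Sum>c<n. A i $$(a,c) * Y$$(c,l))" if "i < m" "a < n" "l < r" for i a l
        using that Ac[OF that(1)] Yc by (simp add: scalar_prod_def atLeast0LessThan)
      have CY: "(C * Y)$$(a,l) = (\<Sum>i<m. \<nu>$i * (A i * Y)$$(a,l))" if a: "a < n" and l: "l < r" for a l
      proof -
        have "(C * Y)$$(a,l) = (\<Sum>c<n. C$$(a,c) * Y$$(c,l))"
          using a l Cc Yc by (simp add: scalar_prod_def atLeast0LessThan)
        also have "\<dots> = (\<Sum>c<n. S$$(a,c) * Y$$(c,l) + (\<Sum>i<m. \<nu>$i * A i $$(a,c) * Y$$(c,l)))"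
          by (intro sum.cong refl) (simp add: S_entry a sum_distrib_right left_diff_distrib)
        also have "\<dots> = (\<Sum>c<n. S$$(a,c) * Y$$(c,l)) + (\<Sum>c<n. \<Sum>i<m. \<nu>$i * A i $$(a,c) * Y$$(c,l))"
          by (rule sum.distrib)
        also have "(\<Sum>c<n. \<Sum>i<m. \<nu>$i * A i $$(a,c) * Y$$(c,l)) = (\<Sum>i<m. \<Sum>c<n. \<nu>$i * A i $$(a,c) * Y$$(c,l))"
          by (rule sum.swap)
        also have "\<dots> = (\<Sum>i<m. \<nu>$i * (A i * Y)$$(a,l))"
          by (intro sum.cong refl) (simp add: AYe a l sum_distrib_left mult.assoc)
        finally have "(C * Y)$$(a,l) = (\<Sum>c<n. S$$(a,c) * Y$$(c,l)) + (\<Sum>i<m. \<nu>$i * (A i * Y)$$(a,l))" .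
        then show ?thesis using kill a l by simp
      qed
      define G where "G = gram m A Y"
      have Gc: "G \<in> carrier_mat m m" unfolding G_def gram_def by simp
      have Gent: "G$$(i,j) = (\<Sum>a<n. \<Sum>l<r. (A i * Y)$$(a,l) * (A j * Y)$$(a,l))" if "i < m" "j < m" for i j
      proof -
        have "G$$(i,j) = frob (A i * Y) (A j * Y)" unfolding G_def gram_def using that by simp
        moreover have "dim_row (A i * Y) = n" "dim_col (A i * Y) = r" using that Adim Yc by auto
        ultimately show ?thesis unfolding frob_def by simp
      qed
      have AopCY: "Aop m A (C * Y * transpose_mat Y) = G *\<^sub>v \<nu>"
      proof (rule eq_vecI)
        fix j assume "j < dim_vec (G *\<^sub>v \<nu>)"
        then have j: "j < m" using Gc by simp
        have "Aop m A (C * Y * transpose_mat Y) $ j = frob (A j) (C * Y * transpose_mat Y)"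
          unfolding Aop_def using j by simp
        also have "\<dots> = (\<Sum>a<n. \<Sum>c<n. \<Sum>l<r. A j $$(a,c) * ((C * Y)$$(a,l) * Y$$(c,l)))"
        proof -
          have CYc: "C * Y \<in> carrier_mat n r" using Cc Yc by simp
          show ?thesis unfolding frob_def Adim[OF j]
          proof (intro sum.cong refl)
            fix a c assume "a \<in> {..<n}" "c \<in> {..<n}"
            then have a: "a < n" and c: "c < n" by auto
            show "A j $$ (a, c) * (C * Y * transpose_mat Y) $$ (a, c) = (\<Sum>l<r. A j $$(a,c) * ((C * Y)$$(a,l) * Y$$(c,l)))"
              unfolding ABt_entry[OF CYc Yc a c] by (rule sum_distrib_left)
          qed
        qed
        also have "\<dots> = (\<Sum>a<n. \<Sum>l<r. (C * Y)$$(a,l) * (A j * Y)$$(a,l))"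
        proof (rule sum.cong[OF refl])
          fix a assume "a \<in> {..<n}"
          then have a: "a < n" by simp
          have "(\<Sum>c<n. \<Sum>l<r. A j $$ (a, c) * ((C * Y) $$ (a, l) * Y $$ (c, l))) =
                (\<Sum>l<r. \<Sum>c<n. A j $$ (a, c) * ((C * Y) $$ (a, l) * Y $$ (c, l)))"
            by (rule sum.swap)
          also have "\<dots> = (\<Sum>l<r. (C * Y)$$(a,l) * (A j * Y)$$(a,l))"
            by (rule sum.cong[OF refl]) (simp add: AYe[OF j a] sum_distrib_left mult.left_commute)
          finally show "(\<Sum>c<n. \<Sum>l<r. A j $$ (a, c) * ((C * Y) $$ (a, l) * Y $$ (c, l))) =
                (\<Sum>l<r. (C * Y)$$(a,l) * (A j * Y)$$(a,l))" .
        qed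
        also have "\<dots> = (\<Sum>a<n. \<Sum>l<r. \<Sum>i<m. \<nu>$i * ((A i * Y)$$(a,l) * (A j * Y)$$(a,l)))"
          by (intro sum.cong refl) (simp add: CY sum_distrib_left ac_simps)
        also have "\<dots> = (\<Sum>i<m. \<nu>$i * G$$(j,i))"
          by (subst sum3_swap, intro sum.cong refl) (simp add: Gent j sum_distrib_left ac_simps)
        also have "\<dots> = (G *\<^sub>v \<nu>) $ j"
          using j Gc \<nu>c by (simp add: scalar_prod_def atLeast0LessThan mult.commute)
        finally show "Aop m A (C * Y * transpose_mat Y) $ j = (G *\<^sub>v \<nu>) $ j" .
      qed (use Gc in \<open>simp add: Aop_def\<close>)
      have lin: "lin_indep_mats m n r (\<lambda>i. A i * Y)"
        using assm1a Yc AX XY unfolding assumption1a_def r_def by auto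
      have Ginj: "c = 0\<^sub>v m" if c: "c \<in> carrier_vec m" and Gc0: "G *\<^sub>v c = 0\<^sub>v m" for c
      proof -
        define M where "M a l = (\<Sum>i<m. c$i * (A i * Y)$$(a,l))" for a l
        have "c \<bullet> (G *\<^sub>v c) = (\<Sum>j<m. c$j * (\<Sum>i<m. G$$(j,i) * c$i))"
          using c Gc by (simp add: scalar_prod_def atLeast0LessThan)
        also have "\<dots> = (\<Sum>j<m. c$j * (\<Sum>a<n. \<Sum>l<r. (A j * Y)$$(a,l) * M a l))"
        proof (rule sum.cong[OF refl])
          fix j assume "j \<in> {..<m}"
          then have j: "j < m" by simp
          have "(\<Sum>i<m. G$$(j,i) * c$i) = (\<Sum>i<m. \<Sum>a<n. \<Sum>l<r. c$i * ((A j * Y)$$(a,l) * (A i * Y)$$(a,l)))"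
            by (intro sum.cong refl) (simp add: Gent j sum_distrib_left sum_distrib_right algebra_simps)
          also have "\<dots> = (\<Sum>a<n. \<Sum>l<r. \<Sum>i<m. c$i * ((A j * Y)$$(a,l) * (A i * Y)$$(a,l)))"
            by (rule sum3_swap[symmetric])
          also have "\<dots> = (\<Sum>a<n. \<Sum>l<r. (A j * Y)$$(a,l) * M a l)"
            unfolding M_def by (intro sum.cong refl) (simp add: sum_distrib_left mult.left_commute)
          finally show "c$j * (\<Sum>i<m. G$$(j,i) * c$i) = c$j * (\<Sum>a<n. \<Sum>l<r. (A j * Y)$$(a,l) * M a l)" by simp
        qed
        also have "\<dots> = (\<Sum>j<m. \<Sum>a<n. \<Sum>l<r. c$j * ((A j * Y)$$(a,l) * M a l))"
          by (simp add: sum_distrib_left)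
        also have "\<dots> = (\<Sum>a<n. \<Sum>l<r. \<Sum>j<m. c$j * ((A j * Y)$$(a,l) * M a l))"
          by (rule sum3_swap[symmetric])
        also have "\<dots> = (\<Sum>a<n. \<Sum>l<r. M a l * M a l)"
          by (intro sum.cong refl) (simp add: M_def[of a l for a l] sum_distrib_right mult.assoc)
        finally have z: "(\<Sum>a<n. \<Sum>l<r. M a l * M a l) = 0" using Gc0 c by simp
        have "\<forall>a\<in>{..<n}. (\<Sum>l<r. M a l * M a l) = 0"
          using z by (subst sum_nonneg_eq_0_iff[symmetric]) (auto intro: sum_nonneg)
        then have Mz: "\<forall>a<n. \<forall>l<r. M a l = 0"
          by (auto simp: sum_nonneg_eq_0_iff)
        then have "\<forall>i<m. c$i = 0" using lin unfolding lin_indep_mats_def M_def by blast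
        then show ?thesis using c by (intro eq_vecI) auto
      qed
      have dG: "det G \<noteq> 0" using Ginj det_0_iff_vec_prod_zero[OF Gc] by blast
      from det_non_zero_imp_unit[OF Gc dG, unfolded Units_def, of "()"]
      obtain B where Bc: "B \<in> carrier_mat m m" and BG: "B * G = 1\<^sub>m m" and GB: "G * B = 1\<^sub>m m"
        by (auto simp: ring_mat_def)
      have pB: "pinv G = B"
        unfolding pinv_def
      proof (rule the_equality)
        show "B \<in> carrier_mat (dim_col G) (dim_row G) \<and> G * B * G = G \<and> B * G * B = B \<and>
          transpose_mat (G * B) = G * B \<and> transpose_mat (B * G) = B * G"
          using Bc Gc BG GB by simp
        fix P assume "P \<in> carrier_mat (dim_col G) (dim_row G) \<and> G * P * G = G \<and> P * G * P = P \<and>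
          transpose_mat (G * P) = G * P \<and> transpose_mat (P * G) = P * G"
        then have Pc: "P \<in> carrier_mat m m" and GPG: "G * P * G = G" using Gc by auto
        have "P = (B * G) * P * (G * B)" using Pc BG GB by simp
        also have "\<dots> = B * (G * P * G) * B"
          using Pc Bc Gc by (simp add: assoc_mult_mat[of _ m m _ m _ m])
        also have "\<dots> = B" using GPG BG Bc Gc by (simp add: assoc_mult_mat[of _ m m _ m _ m])
        finally show "P = B" .
      qed
      have mu_eq: "mu m A C Y = \<nu>"
      proof -
        have "mu m A C Y = B *\<^sub>v (G *\<^sub>v \<nu>)" unfolding mu_def G_def[symmetric] pB AopCY ..
        also have "\<dots> = (B * G) *\<^sub>v \<nu>" using Bc Gc \<nu>c by simp
        also have "\<dots> = \<nu>" using BG \<nu>c by simp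
        finally show ?thesis .
      qed
      have "Smat n m A C Y = S" unfolding Smat_def mu_eq S_def ..
      then show "psd n (Smat n m A C Y) \<and> frob (Smat n m A C Y) X = 0"
        using Spsd frobS unfolding S_def by simp
    qed
  qed
qed

end
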